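(* Let $n$ and $k$ be integers with $3\le k\le n-1$, and let $CT\in\mathcal{CT}_{n,k}$. Then \[ M_1(CT)\le\begin{cases}4n+2k-10 & \text{if } k\equiv 0 \pmod 3,\\ 4n+2k-8 & \text{if } k\equiv 1 \pmod 3,\\ 4n+2k-12 & \text{if } k\equiv 2 \pmod 3.\end{cases} \] Equality holds if and only if $CT$ contains exactly one vertex of degree $3$ when $k\equiv 0 \pmod 3$, no vertex of degree $3$ when $k\equiv 1\pmod 3$, and exactly two vertices of degree $3$ when $k\equiv 2\pmod 3$.
   Context: All graphs are simple and connected. A chemical tree is a tree with maximum degree at most $4$. $d_v$ denotes the degree of a vertex $v$. A vertex of degree $1$ is pendent; a vertex of degree greater than $2$ is branching. A segment of a tree $T$ is a path of positive length in $T$ neither of whose end vertices has degree $2$ and all of whose internal vertices (if any) have degree $2$. $\mathcal{CT}_{n,k}$ denotes the class of all $n$-vertex chemical trees having exactly $k$ segments. The first Zagreb index is $M_1(G)=\sum_{v\in V(G)}d_v^2$. *)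

theory Defs
  imports Main
begin

definition simple_graph :: "'a set \<Rightarrow> 'a set set \<Rightarrow> bool" where
  "simple_graph V E \<longleftrightarrow> finite V \<and>
     (\<forall>e\<in>E. \<exists>u v. e = {u, v} \<and> u \<noteq> v \<and> u \<in> V \<and> v \<in> V)"

definition adj :: "'a set set \<Rightarrow> 'a \<Rightarrow> 'a \<Rightarrow> bool" where
  "adj E u v \<longleftrightarrow> {u, v} \<in> E"

definition degree :: "'a set set \<Rightarrow> 'a \<Rightarrow> nat" where
  "degree E v = card {e \<in> E. v \<in> e}"

definition is_walk :: "'a set \<Rightarrow> 'a set set \<Rightarrow> 'a list \<Rightarrow> bool" where
  "is_walk V E vs \<longleftrightarrow> vs \<noteq> [] \<and> set vs \<subseteq> V \<and>
     (\<forall>i. Suc i < length vs \<longrightarrow> adj E (vs ! i) (vs ! Suc i))"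

definition is_path :: "'a set \<Rightarrow> 'a set set \<Rightarrow> 'a list \<Rightarrow> bool" where
  "is_path V E vs \<longleftrightarrow> is_walk V E vs \<and> distinct vs"

definition connected_graph :: "'a set \<Rightarrow> 'a set set \<Rightarrow> bool" where
  "connected_graph V E \<longleftrightarrow>
     (\<forall>u\<in>V. \<forall>v\<in>V. \<exists>vs. is_walk V E vs \<and> hd vs = u \<and> last vs = v)"

definition is_cycle :: "'a set \<Rightarrow> 'a set set \<Rightarrow> 'a list \<Rightarrow> bool" where
  "is_cycle V E vs \<longleftrightarrow> is_path V E vs \<and> length vs \<ge> 3 \<and> adj E (last vs) (hd vs)"

definition is_tree :: "'a set \<Rightarrow> 'a set set \<Rightarrow> bool" where
  "is_tree V E \<longleftrightarrow> simple_graph V E \<and> V \<noteq> {} \<and> connected_graph V E \<and>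
     (\<nexists>vs. is_cycle V E vs)"

definition chemical_tree :: "'a set \<Rightarrow> 'a set set \<Rightarrow> bool" where
  "chemical_tree V E \<longleftrightarrow> is_tree V E \<and> (\<forall>v\<in>V. degree E v \<le> 4)"

definition path_edges :: "'a list \<Rightarrow> 'a set set" where
  "path_edges vs = {{vs ! i, vs ! Suc i} | i. Suc i < length vs}"

definition is_segment :: "'a set \<Rightarrow> 'a set set \<Rightarrow> 'a list \<Rightarrow> bool" where
  "is_segment V E vs \<longleftrightarrow> is_path V E vs \<and> length vs \<ge> 2 \<and>
     degree E (hd vs) \<noteq> 2 \<and> degree E (last vs) \<noteq> 2 \<and>
     (\<forall>i. 0 < i \<and> Suc i < length vs \<longrightarrow> degree E (vs ! i) = 2)"

text \<open>Segments are counted as subgraphs (a path and its reversal are the same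
  segment); a path of positive length is determined by its edge set.\<close>

definition segments :: "'a set \<Rightarrow> 'a set set \<Rightarrow> 'a set set set" where
  "segments V E = {path_edges vs | vs. is_segment V E vs}"

definition num_segments :: "'a set \<Rightarrow> 'a set set \<Rightarrow> nat" where
  "num_segments V E = card (segments V E)"

definition M1 :: "'a set \<Rightarrow> 'a set set \<Rightarrow> nat" where
  "M1 V E = (\<Sum>v\<in>V. (degree E v)^2)"

end

theory Submission imports Defs begin

lemma sg_finV: "simple_graph V E \<Longrightarrow> finite V" unfolding simple_graph_def by simp
lemma sg_edgeE: "simple_graph V E \<Longrightarrow> e \<in> E \<Longrightarrow> \<exists>a b. e = {a,b} \<and> a \<noteq> b \<and> a \<in> V \<and> b \<in> V"
  unfolding simple_graph_def by simp
lemma sg_sub: "simple_graph V E \<Longrightarrow> E \<subseteq> Pow V"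
  unfolding simple_graph_def by auto
lemma sg_finE: "simple_graph V E \<Longrightarrow> finite E"
  using sg_sub sg_finV finite_Pow_iff finite_subset by metis
lemma tree_sg: "is_tree V E \<Longrightarrow> simple_graph V E" unfolding is_tree_def by simp
lemma tree_con: "is_tree V E \<Longrightarrow> connected_graph V E" unfolding is_tree_def by simp
lemma tree_nc: "is_tree V E \<Longrightarrow> \<not> is_cycle V E vs" unfolding is_tree_def by simp
lemma tree_ne: "is_tree V E \<Longrightarrow> V \<noteq> {}" unfolding is_tree_def by simp
lemma path_walk: "is_path V E vs \<Longrightarrow> is_walk V E vs" unfolding is_path_def by simp
lemma path_dist: "is_path V E vs \<Longrightarrow> distinct vs" unfolding is_path_def by simp
lemma walk_ne: "is_walk V E vs \<Longrightarrow> vs \<noteq> []" unfolding is_walk_def by simp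
lemma walk_set: "is_walk V E vs \<Longrightarrow> set vs \<subseteq> V" unfolding is_walk_def by simp
lemma walk_adj: "is_walk V E vs \<Longrightarrow> Suc i < length vs \<Longrightarrow> {vs!i, vs!Suc i} \<in> E"
  unfolding is_walk_def adj_def by simp
lemma con_walk: "connected_graph V E \<Longrightarrow> u \<in> V \<Longrightarrow> v \<in> V \<Longrightarrow> \<exists>vs. is_walk V E vs \<and> hd vs = u \<and> last vs = v"
  unfolding connected_graph_def by simp


lemma dist_nth_ne: "distinct xs \<Longrightarrow> i < length xs \<Longrightarrow> j < length xs \<Longrightarrow> i \<noteq> j \<Longrightarrow> xs!i \<noteq> xs!j"
  by (simp add: nth_eq_iff_index_eq)

lemma sg_edge: assumes "simple_graph V E" "{a,b} \<in> E" shows "a \<noteq> b \<and> a \<in> V \<and> b \<in> V"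
proof -
  obtain u v where uv: "{a,b} = {u,v}" "u \<noteq> v" "u \<in> V" "v \<in> V"
    using assms unfolding simple_graph_def by blast
  then have "(a = u \<and> b = v) \<or> (a = v \<and> b = u)" by (simp add: doubleton_eq_iff)
  thus ?thesis using uv by auto
qed

lemma sg_edge_form: assumes "simple_graph V E" "e \<in> E" "x \<in> e" shows "\<exists>u. e = {x,u} \<and> u \<noteq> x"
proof -
  obtain a b where ab: "e = {a,b}" "a \<noteq> b" using assms unfolding simple_graph_def by blast
  show ?thesis
  proof (cases "x = a")
    case True then show ?thesis using ab by blast
  next
    case False then have "x = b" using ab assms(3) by blast
    moreover have "e = {b,a}" using ab by (simp add: insert_commute)
    ultimately show ?thesis using ab by blast
  qed
qed

lemma path_cycle:
  assumes p: "is_path V E vs" and a: "adj E (last vs) (vs!j)" and j: "j + 2 < length vs"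
  shows "is_cycle V E (drop j vs)"
proof -
  have w: "is_walk V E vs" "distinct vs" using path_walk[OF p] path_dist[OF p] by auto
  have "is_walk V E (drop j vs)"
    unfolding is_walk_def
  proof (intro conjI allI impI)
    show "drop j vs \<noteq> []" using j by simp
    have "set vs \<subseteq> V" using w(1) unfolding is_walk_def by blast
    then show "set (drop j vs) \<subseteq> V" using set_drop_subset[of j vs] by blast
    fix i assume "Suc i < length (drop j vs)"
    then have "Suc (j+i) < length vs" by simp
    then have "adj E (vs!(j+i)) (vs!Suc(j+i))" using w(1) unfolding is_walk_def by blast
    thus "adj E (drop j vs ! i) (drop j vs ! Suc i)" using j by simp
  qed
  moreover have "distinct (drop j vs)" using w(2) by simp
  moreover have "length (drop j vs) \<ge> 3" using j by simp
  moreover have "last (drop j vs) = last vs" using j by simp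
  moreover have "hd (drop j vs) = vs!j" using j by (simp add: hd_drop_conv_nth)
  ultimately show ?thesis using a unfolding is_cycle_def is_path_def by simp
qed

lemma path_snoc:
  assumes p: "is_path V E vs" and a: "adj E (last vs) u" and u: "u \<in> V" "u \<notin> set vs"
  shows "is_path V E (vs @ [u])"
proof -
  have w: "is_walk V E vs" "distinct vs" using path_walk[OF p] path_dist[OF p] by auto
  have ne: "vs \<noteq> []" using w unfolding is_walk_def by blast
  have "is_walk V E (vs @ [u])" unfolding is_walk_def
  proof (intro conjI allI impI)
    show "vs @ [u] \<noteq> []" by simp
    show "set (vs @ [u]) \<subseteq> V" using w(1) u unfolding is_walk_def by auto
    fix i assume i: "Suc i < length (vs @ [u])"
    show "adj E ((vs @ [u]) ! i) ((vs @ [u]) ! Suc i)"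
    proof (cases "Suc i < length vs")
      case True thus ?thesis using w(1) unfolding is_walk_def by (simp add: nth_append)
    next
      case False
      then have "Suc i = length vs" using i by auto
      then have "i = length vs - 1" by simp
      thus ?thesis using a ne by (simp add: nth_append last_conv_nth)
    qed
  qed
  thus ?thesis using w(2) u unfolding is_path_def by auto
qed

lemma max_path_nbr:
  assumes t: "is_tree V E" and p: "is_path V E vs" and l: "2 \<le> length vs"
   and e: "{last vs, u} \<in> E" and ext: "u \<notin> set vs \<Longrightarrow> False"
  shows "u = vs ! (length vs - 2)"
proof -
  have sg: "simple_graph V E" using tree_sg[OF t] .
  have "u \<in> set vs" using ext by blast
  then obtain j where j: "j < length vs" "vs!j = u" by (metis in_set_conv_nth)
  have "vs \<noteq> []" using l by auto
  then have lastc: "last vs = vs ! (length vs - 1)" by (simp add: last_conv_nth)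
  have "u \<noteq> last vs" using sg_edge[OF sg e] by auto
  hence "j \<noteq> length vs - 1" using j lastc by auto
  moreover have "\<not> j + 2 < length vs"
  proof
    assume jj: "j+2 < length vs"
    have "adj E (last vs) (vs!j)" using e j unfolding adj_def by simp
    then have "is_cycle V E (drop j vs)" using path_cycle[OF p _ jj] by simp
    thus False using tree_nc[OF t] by blast
  qed
  ultimately have "j = length vs - 2" using j by arith
  thus ?thesis using j by simp
qed

lemma finite_paths: "finite V \<Longrightarrow> finite {vs. is_path V E vs}"
proof -
  assume f: "finite V"
  have "{vs. is_path V E vs} \<subseteq> {xs. set xs \<subseteq> V \<and> length xs \<le> card V}"
  proof
    fix xs assume "xs \<in> {vs. is_path V E vs}"
    then have "set xs \<subseteq> V" "distinct xs" unfolding is_path_def is_walk_def by auto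
    then show "xs \<in> {xs. set xs \<subseteq> V \<and> length xs \<le> card V}"
    proof -
      have "length xs = card (set xs)" using \<open>distinct xs\<close> by (simp add: distinct_card)
      also have "\<dots> \<le> card V" using card_mono[OF f \<open>set xs \<subseteq> V\<close>] .
      finally show ?thesis using \<open>set xs \<subseteq> V\<close> by simp
    qed
  qed
  thus ?thesis using finite_lists_length_le[OF f] finite_subset by blast
qed

lemma max_length_ex: "finite P \<Longrightarrow> x \<in> P \<Longrightarrow> \<exists>vs\<in>P. \<forall>ws\<in>P. length ws \<le> length (vs::'a list)"
proof -
  assume f: "finite P" and x: "x \<in> P"
  have "Max (length ` P) \<in> length ` P" using f x by (intro Max_in) auto
  then obtain vs where vs: "vs \<in> P" "length vs = Max (length ` P)" by auto
  have "\<forall>ws\<in>P. length ws \<le> length vs" using f vs(2) by auto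
  then show ?thesis using vs(1) by blast
qed

lemma walk_to_path:
  "is_walk V E vs \<Longrightarrow> \<exists>ws. is_path V E ws \<and> hd ws = hd vs \<and> last ws = last vs"
proof (induction "length vs" arbitrary: vs rule: less_induct)
  case less
  show ?case
  proof (cases "distinct vs")
    case True then show ?thesis using less.prems unfolding is_path_def by blast
  next
    case False
    then obtain a b where ab: "a < length vs" "b < length vs" "a \<noteq> b" "vs!a = vs!b"
      unfolding distinct_conv_nth by blast
    define i where "i = min a b"
    define j where "j = max a b"
    have ij: "i < j" "j < length vs" "vs!i = vs!j" using ab by (auto simp: i_def j_def min_def max_def)
    define ws where "ws = take i vs @ drop j vs"
    have lw: "length ws = i + (length vs - j)" using ij unfolding ws_def by simp
    have nth1: "ws ! k = vs ! k" if "k < i" for k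
      using that ij unfolding ws_def by (simp add: nth_append)
    have nth2: "ws ! k = vs ! (j + (k - i))" if "i \<le> k" "k < length ws" for k
      using that ij lw unfolding ws_def by (simp add: nth_append)
    have w: "is_walk V E ws" unfolding is_walk_def
    proof (intro conjI allI impI)
      show "ws \<noteq> []" using ij ws_def by simp
      have "set ws \<subseteq> set vs" unfolding ws_def set_append using set_take_subset[of i vs] set_drop_subset[of j vs] by (rule Un_least)
      then show "set ws \<subseteq> V" using less.prems unfolding is_walk_def by blast
      fix k assume k: "Suc k < length ws"
      have A: "\<And>m. Suc m < length vs \<Longrightarrow> adj E (vs!m) (vs!Suc m)" using less.prems unfolding is_walk_def by blast
      show "adj E (ws ! k) (ws ! Suc k)"
      proof (cases "Suc k < i")
        case True
        have "Suc k < length vs" using True ij by simp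
        then show ?thesis using nth1[of k] nth1[of "Suc k"] True A[of k] by simp
      next
        case F: False
        show ?thesis
        proof (cases "Suc k = i")
          case True
          have e1: "ws ! k = vs ! k" using nth1[of k] True by simp
          have e2: "ws ! Suc k = vs ! j" using nth2[of "Suc k"] True k by simp
          have "Suc k < length vs" using True ij by simp
          then show ?thesis using e1 e2 True A[of k] ij by simp
        next
          case False
          then have ik: "i \<le> k" using F by auto
          have e1: "ws ! k = vs ! (j + (k - i))" using nth2[of k] ik k by simp
          have e2: "ws ! Suc k = vs ! Suc (j + (k - i))" using nth2[of "Suc k"] ik k
            by (simp add: Suc_diff_le)
          have "Suc (j + (k - i)) < length vs" using k lw ik ij by arith
          then show ?thesis using e1 e2 A by simp
        qed
      qed
    qed
    have wne: "ws \<noteq> []" using ij ws_def by simp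
    have vne: "vs \<noteq> []" using ij by auto
    have "hd ws = ws ! 0" using wne by (simp add: hd_conv_nth)
    also have "\<dots> = vs ! 0"
    proof (cases "i = 0")
      case True
      then have "ws ! 0 = vs ! j" using nth2[of 0] wne by simp
      then show ?thesis using ij True by simp
    next
      case False
      then show ?thesis using nth1[of 0] by simp
    qed
    also have "\<dots> = hd vs" using vne by (simp add: hd_conv_nth)
    finally have "hd ws = hd vs" .
    have hl: "last ws = last vs" using ij unfolding ws_def by simp
    have lt: "length ws < length vs" using lw ij by simp
    obtain ws' where ws': "is_path V E ws'" "hd ws' = hd ws" "last ws' = last ws"
      using less.hyps[OF lt w] by blast
    have "is_path V E ws' \<and> hd ws' = hd vs \<and> last ws' = last vs"
      using ws' hl \<open>hd ws = hd vs\<close> by simp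
    then show ?thesis by blast
  qed
qed



lemma walk_mono: "is_walk V' E' vs \<Longrightarrow> V' \<subseteq> V \<Longrightarrow> E' \<subseteq> E \<Longrightarrow> is_walk V E vs"
  unfolding is_walk_def adj_def by blast

lemma cycle_mono: "is_cycle V' E' vs \<Longrightarrow> V' \<subseteq> V \<Longrightarrow> E' \<subseteq> E \<Longrightarrow> is_cycle V E vs"
  unfolding is_cycle_def is_path_def adj_def using walk_mono by blast

lemma card2_ex: "finite V \<Longrightarrow> 2 \<le> card V \<Longrightarrow> \<exists>x y. x \<in> V \<and> y \<in> V \<and> x \<noteq> y"
proof -
  assume f: "finite V" and c: "2 \<le> card V"
  then have "\<not> card V \<le> Suc 0" by simp
  then show ?thesis using card_le_Suc0_iff_eq[OF f] by blast
qed

lemma walk_len2: "is_walk V E ws \<Longrightarrow> hd ws \<noteq> last ws \<Longrightarrow> 2 \<le> length ws"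
proof (rule ccontr)
  assume w: "is_walk V E ws" and h: "hd ws \<noteq> last ws" and l: "\<not> 2 \<le> length ws"
  have "length ws \<noteq> 0" using walk_ne[OF w] by simp
  then have "length ws = Suc 0" using l by arith
  then obtain a where "ws = [a]" by (auto simp: length_Suc_conv)
  then show False using h by simp
qed

lemma last_idx: "2 \<le> length vs \<Longrightarrow> last vs = vs ! Suc (length vs - 2)"
proof -
  assume l: "2 \<le> length vs"
  then have ne: "vs \<noteq> []" by auto
  have "Suc (length vs - 2) = length vs - 1" using l by arith
  thus ?thesis using ne by (simp add: last_conv_nth)
qed

lemma path_last_edge: "is_path V E vs \<Longrightarrow> 2 \<le> length vs \<Longrightarrow> {vs ! (length vs - 2), last vs} \<in> E"
proof -
  assume p: "is_path V E vs" and l: "2 \<le> length vs"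
  have "Suc (length vs - 2) < length vs" using l by arith
  then have "adj E (vs!(length vs - 2)) (vs!Suc(length vs - 2))"
    using p unfolding is_path_def is_walk_def by blast
  thus ?thesis using last_idx[OF l] unfolding adj_def by simp
qed

lemma tree_leaf:
  assumes t: "is_tree V E" and c: "2 \<le> card V"
  shows "\<exists>v u. v \<in> V \<and> u \<in> V \<and> u \<noteq> v \<and> {e\<in>E. v \<in> e} = {{u,v}}"
proof -
  have sg: "simple_graph V E" and con: "connected_graph V E" using tree_sg[OF t] tree_con[OF t] by auto
  have fV: "finite V" using sg by (rule sg_finV)
  obtain x y where xy: "x \<in> V" "y \<in> V" "x \<noteq> y" using card2_ex[OF fV c] by blast
  obtain ws where ws: "is_walk V E ws" "hd ws = x" "last ws = y"
    using con xy unfolding connected_graph_def by blast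
  have l2: "2 \<le> length ws" using walk_len2[OF ws(1)] ws xy by simp
  then have e0: "{ws!0, ws!1} \<in> E" using ws(1) unfolding is_walk_def adj_def by auto
  have p0: "is_path V E [ws!0, ws!1]"
    using e0 sg_edge[OF sg e0] unfolding is_path_def is_walk_def adj_def
    by (auto simp: nth_Cons split: nat.splits)
  define P where "P = {vs. is_path V E vs \<and> 2 \<le> length vs}"
  have finP: "finite P" using finite_paths[OF fV, of E] unfolding P_def
    by (rule finite_subset[rotated]) auto
  obtain vs where vs: "vs \<in> P" and mx: "\<forall>ws\<in>P. length ws \<le> length vs"
    using max_length_ex[OF finP, of "[ws!0, ws!1]"] p0 P_def by auto
  have p: "is_path V E vs" and l: "2 \<le> length vs" using vs P_def by auto
  define x' where "x' = last vs"
  define p' where "p' = vs ! (length vs - 2)"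
  have ep: "{p', x'} \<in> E" using path_last_edge[OF p l] x'_def p'_def by simp
  have "{e\<in>E. x' \<in> e} = {{p', x'}}"
  proof
    show "{{p', x'}} \<subseteq> {e \<in> E. x' \<in> e}" using ep by auto
    show "{e \<in> E. x' \<in> e} \<subseteq> {{p', x'}}"
    proof
      fix e assume e: "e \<in> {e \<in> E. x' \<in> e}"
      then obtain u where u: "e = {x',u}" "u \<noteq> x'" using sg_edge_form[OF sg] by blast
      have eu: "{last vs, u} \<in> E" using e u x'_def by simp
      have "u = p'" unfolding p'_def
      proof (rule max_path_nbr[OF t p l eu])
        assume nu: "u \<notin> set vs"
        have "is_path V E (vs @ [u])"
          using path_snoc[OF p _ _ nu] eu sg_edge[OF sg eu] unfolding adj_def by blast
        then have "vs @ [u] \<in> P" using l P_def by simp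
        then show False using mx by fastforce
      qed
      thus "e \<in> {{p', x'}}" using u by auto
    qed
  qed
  moreover have "p' \<noteq> x'" "p' \<in> V" "x' \<in> V" using sg_edge[OF sg ep] by auto
  ultimately show ?thesis by blast
qed

lemma tree_remove_leaf:
  assumes t: "is_tree V E" and v: "v \<in> V" "u \<in> V" "u \<noteq> v" and le: "{e\<in>E. v \<in> e} = {{u,v}}"
  shows "is_tree (V - {v}) (E - {{u,v}})"
proof -
  have sg: "simple_graph V E" and con: "connected_graph V E" and nc: "\<nexists>vs. is_cycle V E vs"
    using tree_sg[OF t] tree_con[OF t] tree_nc[OF t] by auto
  have fV: "finite V" using sg by (rule sg_finV)
  have nv: "v \<notin> e" if "e \<in> E - {{u,v}}" for e using that le by blast
  have sg': "simple_graph (V - {v}) (E - {{u,v}})"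
    unfolding simple_graph_def
  proof (intro conjI ballI)
    show "finite (V - {v})" using fV by simp
    fix e assume e: "e \<in> E - {{u,v}}"
    then obtain a b where ab: "e = {a,b}" "a \<noteq> b" "a \<in> V" "b \<in> V" using sg_edgeE[OF sg] by blast
    have "v \<notin> e" using nv e by blast
    then show "\<exists>a b. e = {a, b} \<and> a \<noteq> b \<and> a \<in> V - {v} \<and> b \<in> V - {v}" using ab by blast
  qed
  have con': "connected_graph (V - {v}) (E - {{u,v}})"
    unfolding connected_graph_def
  proof (intro ballI)
    fix x y assume x: "x \<in> V - {v}" and y: "y \<in> V - {v}"
    obtain ws0 where w0: "is_walk V E ws0" "hd ws0 = x" "last ws0 = y"
      using con_walk[OF con] x y by blast
    obtain ws where ws: "is_path V E ws" "hd ws = x" "last ws = y"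
      using walk_to_path[OF w0(1)] w0(2,3) by auto
    have ne: "ws \<noteq> []" using ws unfolding is_path_def is_walk_def by auto
    have A: "\<And>m. Suc m < length ws \<Longrightarrow> {ws!m, ws!Suc m} \<in> E"
      using ws unfolding is_path_def is_walk_def adj_def by blast
    have dist: "distinct ws" using path_dist[OF ws(1)] .
    have notv: "v \<notin> set ws"
    proof
      assume "v \<in> set ws"
      then obtain i where i: "i < length ws" "ws!i = v" by (auto simp: in_set_conv_nth)
      have "i \<noteq> 0"
      proof
        assume "i = 0" then show False using i ws(2) x ne by (simp add: hd_conv_nth)
      qed
      moreover have "i \<noteq> length ws - 1" using i ws(3) y ne by (auto simp: last_conv_nth)
      ultimately have j0: "i = Suc (i - 1)" "Suc i < length ws" using i by arith+
      define j where "j = i - 1"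
      have j: "i = Suc j" "Suc i < length ws" using j0 unfolding j_def by auto
      have e1: "{ws!j, v} \<in> E" using A[of j] j i by simp
      have e2: "{v, ws!Suc i} \<in> E" using A[of i] j i by simp
      have m1: "{ws!j, v} \<in> {e\<in>E. v \<in> e}" using e1 by simp
      have q1: "{ws!j, v} = {u,v}" using m1 le by simp
      have n1: "ws!j \<noteq> v" using dist_nth_ne[OF dist, of j i] i j by simp
      have r1: "ws!j = u" using q1 n1 by (auto simp: doubleton_eq_iff)
      have m2: "{v, ws!Suc i} \<in> {e\<in>E. v \<in> e}" using e2 by simp
      have q2: "{v, ws!Suc i} = {u,v}" using m2 le by simp
      have n2: "ws!Suc i \<noteq> v" using dist_nth_ne[OF dist, of "Suc i" i] i j by simp
      have r2: "ws!Suc i = u" using q2 n2 by (auto simp: doubleton_eq_iff)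
      have "ws!j = ws!Suc i" using r1 r2 by simp
      thus False using dist_nth_ne[OF dist, of j "Suc i"] i j by simp
    qed
    have "is_walk (V - {v}) (E - {{u,v}}) ws"
      unfolding is_walk_def
    proof (intro conjI allI impI)
      show "ws \<noteq> []" by (rule ne)
      show "set ws \<subseteq> V - {v}" using notv ws unfolding is_path_def is_walk_def by auto
      fix m assume m: "Suc m < length ws"
      have "ws!m \<in> set ws" "ws!Suc m \<in> set ws" using m by simp_all
      then have "ws!m \<noteq> v" "ws!Suc m \<noteq> v" using notv by metis+
      then have "{ws!m, ws!Suc m} \<noteq> {u,v}" by (auto simp: doubleton_eq_iff)
      then show "adj (E - {{u, v}}) (ws ! m) (ws ! Suc m)" using A[OF m] unfolding adj_def by simp
    qed
    then show "\<exists>vs. is_walk (V - {v}) (E - {{u, v}}) vs \<and> hd vs = x \<and> last vs = y" using ws by blast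
  qed
  have nc': "\<not> is_cycle (V - {v}) (E - {{u,v}}) cs" for cs
  proof
    assume "is_cycle (V - {v}) (E - {{u,v}}) cs"
    then have "is_cycle V E cs" by (rule cycle_mono) auto
    then show False using tree_nc[OF t] by blast
  qed
  have "V - {v} \<noteq> {}" using v by blast
  then show ?thesis using sg' con' nc' unfolding is_tree_def by simp
qed

lemma tree_card_E: "is_tree V E \<Longrightarrow> card E = card V - 1"
proof (induction "card V" arbitrary: V E rule: less_induct)
  case less
  have sg: "simple_graph V E" using tree_sg[OF less.prems] .
  have fV: "finite V" using sg by (rule sg_finV)
  have fE: "finite E" using sg_finE[OF sg] .
  have "V \<noteq> {}" using tree_ne[OF less.prems] .
  then have c1: "card V \<ge> 1" using fV by (simp add: Suc_leI card_gt_0_iff)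
  show ?case
  proof (cases "card V = 1")
    case True
    then obtain a where a: "V = {a}" using card_1_singletonE by blast
    have "E = {}"
    proof (rule ccontr)
      assume "E \<noteq> {}"
      then obtain e where "e \<in> E" by blast
      then obtain x y where "x \<noteq> y" "x \<in> V" "y \<in> V" using sg_edgeE[OF sg] by blast
      thus False using a by blast
    qed
    thus ?thesis using True by simp
  next
    case False
    then have c2: "2 \<le> card V" using c1 by arith
    obtain v u where vu: "v \<in> V" "u \<in> V" "u \<noteq> v" "{e\<in>E. v \<in> e} = {{u,v}}"
      using tree_leaf[OF less.prems c2] by blast
    have t': "is_tree (V - {v}) (E - {{u,v}})" using tree_remove_leaf[OF less.prems vu] .
    have cV: "card (V - {v}) = card V - 1" using vu fV by simp
    have "card (E - {{u,v}}) = card (V - {v}) - 1"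
      using less.hyps[OF _ t'] cV c2 by simp
    moreover have "{u,v} \<in> E" using vu by blast
    then have "card (E - {{u,v}}) = card E - 1" using fE by simp
    moreover have "card E \<ge> 1" proof -
      have "card E > 0" using \<open>{u,v} \<in> E\<close> fE by (auto simp: card_gt_0_iff)
      then show ?thesis by simp
    qed
    ultimately show ?thesis using cV c2 by arith
  qed
qed

lemma handshake: assumes sg: "simple_graph V E" shows "(\<Sum>v\<in>V. degree E v) = 2 * card E"
proof -
  have fV: "finite V" using sg by (rule sg_finV)
  have fE: "finite E" using sg_finE[OF sg] .
  have "(\<Sum>v\<in>V. degree E v) = (\<Sum>v\<in>V. \<Sum>e\<in>{e. e \<in> E \<and> v \<in> e}. (1::nat))" unfolding degree_def by simp
  also have "\<dots> = (\<Sum>e\<in>E. \<Sum>v\<in>{v. v \<in> V \<and> v \<in> e}. 1)" by (rule sum.swap_restrict[OF fV fE])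
  also have "\<dots> = (\<Sum>e\<in>E. 2)"
  proof (rule sum.cong[OF refl])
    fix e assume "e \<in> E"
    then obtain a b where ab: "e = {a,b}" "a \<noteq> b" "a \<in> V" "b \<in> V" using sg_edgeE[OF sg] by blast
    then have "{v. v \<in> V \<and> v \<in> e} = {a,b}" by auto
    thus "(\<Sum>v\<in>{v. v \<in> V \<and> v \<in> e}. 1) = (2::nat)" using ab by simp
  qed
  finally show ?thesis by simp
qed



lemma deg2_three:
  assumes fE: "finite E" and d: "degree E x = 2" and e: "{x,a} \<in> E" "{x,b} \<in> E" "{x,c} \<in> E"
   and n: "a \<noteq> x" "b \<noteq> x" "c \<noteq> x" "a \<noteq> b" "b \<noteq> c"
  shows "a = c"
proof (rule ccontr)
  assume ac: "a \<noteq> c"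
  have sub: "{{x,a},{x,b},{x,c}} \<subseteq> {e\<in>E. x \<in> e}" using e by auto
  have fin: "finite {e\<in>E. x \<in> e}" using fE by simp
  have "card {{x,a},{x,b},{x,c}} \<le> 2" using card_mono[OF fin sub] d unfolding degree_def by simp
  moreover have "card {{x,a},{x,b},{x,c}} = 3" using n ac by (auto simp: doubleton_eq_iff)
  ultimately show False by simp
qed

lemma seg_facts:
  assumes s: "is_segment V E vs"
  shows "\<And>m. Suc m < length vs \<Longrightarrow> {vs!m, vs!Suc m} \<in> E"
    and "distinct vs" and "2 \<le> length vs" and "vs \<noteq> []"
    and "\<And>i. 0 < i \<Longrightarrow> Suc i < length vs \<Longrightarrow> degree E (vs!i) = 2"
    and "degree E (vs!0) \<noteq> 2" and "degree E (vs!(length vs - 1)) \<noteq> 2"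
    and "set vs \<subseteq> V"
proof -
  show A: "\<And>m. Suc m < length vs \<Longrightarrow> {vs!m, vs!Suc m} \<in> E"
    using s unfolding is_segment_def is_path_def is_walk_def adj_def by blast
  show "distinct vs" "2 \<le> length vs" using s unfolding is_segment_def is_path_def by auto
  then show ne: "vs \<noteq> []" by auto
  show "\<And>i. 0 < i \<Longrightarrow> Suc i < length vs \<Longrightarrow> degree E (vs!i) = 2"
    using s unfolding is_segment_def by blast
  show "degree E (vs!0) \<noteq> 2" "degree E (vs!(length vs - 1)) \<noteq> 2"
    using s ne unfolding is_segment_def by (auto simp: hd_conv_nth last_conv_nth)
  show "set vs \<subseteq> V" using s unfolding is_segment_def is_path_def is_walk_def by blast
qed

lemma seg_inj:
  assumes fE: "finite E" and s1: "is_segment V E vs" and s2: "is_segment V E ws"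
   and h0: "vs!0 = ws!0" and h1: "vs!1 = ws!1"
  shows "vs = ws"
proof -
  note A1 = seg_facts(1)[OF s1] and d1 = seg_facts(2)[OF s1] and l1 = seg_facts(3)[OF s1]
    and D1 = seg_facts(5)[OF s1] and e1 = seg_facts(7)[OF s1]
  note A2 = seg_facts(1)[OF s2] and d2 = seg_facts(2)[OF s2] and l2 = seg_facts(3)[OF s2]
    and D2 = seg_facts(5)[OF s2] and e2 = seg_facts(7)[OF s2]
  have claim: "vs!i = ws!i" if "i < length vs" "i < length ws" for i
    using that
  proof (induction i rule: less_induct)
    case (less i)
    show ?case
    proof (cases i)
      case 0 then show ?thesis using h0 by simp
    next
      case (Suc j)
      show ?thesis
      proof (cases j)
        case 0 then show ?thesis using h1 Suc by simp
      next
        case (Suc m)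
        have i: "i = Suc (Suc m)" using \<open>i = Suc j\<close> Suc by simp
        have eqm: "vs!m = ws!m" using less.IH[of m] less.prems i by simp
        have eqm1: "vs!Suc m = ws!Suc m" using less.IH[of "Suc m"] less.prems i by simp
        have dx: "degree E (vs!Suc m) = 2" using D1[of "Suc m"] less.prems i by simp
        have f1: "{vs!Suc m, vs!m} \<in> E" using A1[of m] less.prems i by (simp add: insert_commute)
        have f2: "{vs!Suc m, vs!i} \<in> E" using A1[of "Suc m"] less.prems i by simp
        have f3: "{vs!Suc m, ws!i} \<in> E" using A2[of "Suc m"] less.prems i eqm1 by simp
        have n1: "vs!i \<noteq> vs!Suc m" using d1 less.prems i by (simp add: nth_eq_iff_index_eq)
        have n2: "vs!m \<noteq> vs!Suc m" using d1 less.prems i by (simp add: nth_eq_iff_index_eq)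
        have n3: "ws!i \<noteq> vs!Suc m" using d2 less.prems i eqm1 by (simp add: nth_eq_iff_index_eq)
        have n4: "vs!i \<noteq> vs!m" using d1 less.prems i by (simp add: nth_eq_iff_index_eq)
        have n5: "vs!m \<noteq> ws!i" using d2 less.prems i eqm by (simp add: nth_eq_iff_index_eq)
        show ?thesis using deg2_three[OF fE dx f2 f1 f3 n1 n2 n3 n4 n5] .
      qed
    qed
  qed
  have len: "length vs = length ws"
  proof (rule ccontr)
    assume "length vs \<noteq> length ws"
    then consider "length vs < length ws" | "length ws < length vs" by arith
    then show False
    proof cases
      case 1
      have "vs!(length vs - 1) = ws!(length vs - 1)" using claim 1 l1 by simp
      moreover have "degree E (ws!(length vs - 1)) = 2" using D2[of "length vs - 1"] 1 l1 by simp
      ultimately show False using e1 by simp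
    next
      case 2
      have "vs!(length ws - 1) = ws!(length ws - 1)" using claim 2 l2 by simp
      moreover have "degree E (vs!(length ws - 1)) = 2" using D1[of "length ws - 1"] 2 l2 by simp
      ultimately show False using e2 by simp
    qed
  qed
  show ?thesis using len claim by (simp add: nth_equalityI)
qed

lemma seg_rev: assumes s: "is_segment V E vs" shows "is_segment V E (rev vs)"
proof -
  have p: "is_walk V E vs" "distinct vs" "2 \<le> length vs" "degree E (hd vs) \<noteq> 2" "degree E (last vs) \<noteq> 2"
    and D: "\<And>i. 0 < i \<Longrightarrow> Suc i < length vs \<Longrightarrow> degree E (vs!i) = 2"
    using s unfolding is_segment_def is_path_def by auto
  have A: "\<And>m. Suc m < length vs \<Longrightarrow> {vs!m, vs!Suc m} \<in> E" using p(1) unfolding is_walk_def adj_def by blast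
  have ne: "vs \<noteq> []" using p by auto
  have w: "is_walk V E (rev vs)" unfolding is_walk_def adj_def
  proof (intro conjI allI impI)
    show "rev vs \<noteq> []" using ne by simp
    show "set (rev vs) \<subseteq> V" using p(1) unfolding is_walk_def by simp
    fix i assume i: "Suc i < length (rev vs)"
    define k where "k = length vs - Suc (Suc i)"
    have k: "Suc k < length vs" "length vs - Suc i = Suc k" using i k_def by auto
    have "{vs!k, vs!Suc k} \<in> E" using A k by simp
    thus "{rev vs ! i, rev vs ! Suc i} \<in> E" using i k by (simp add: rev_nth insert_commute k_def[symmetric])
  qed
  have D': "\<forall>i. 0 < i \<and> Suc i < length (rev vs) \<longrightarrow> degree E (rev vs ! i) = 2"
  proof (intro allI impI)
    fix i assume i: "0 < i \<and> Suc i < length (rev vs)"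
    have "rev vs ! i = vs ! (length vs - Suc i)" using i by (simp add: rev_nth)
    moreover have "0 < length vs - Suc i" "Suc (length vs - Suc i) < length vs" using i by auto
    ultimately show "degree E (rev vs ! i) = 2" using D by simp
  qed
  show ?thesis unfolding is_segment_def is_path_def using w p D' by (simp add: hd_rev last_rev)
qed

lemma pe_rev_sub: "path_edges (rev vs) \<subseteq> path_edges vs"
proof
  fix e assume "e \<in> path_edges (rev vs)"
  then obtain i where i: "e = {rev vs ! i, rev vs ! Suc i}" "Suc i < length vs" unfolding path_edges_def by auto
  define k where "k = length vs - Suc (Suc i)"
  have k: "Suc k < length vs" "length vs - Suc i = Suc k" using i k_def by auto
  have "e = {vs!k, vs!Suc k}" using i k by (simp add: rev_nth insert_commute k_def[symmetric])
  thus "e \<in> path_edges vs" using k unfolding path_edges_def by blast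
qed

lemma pe_rev: "path_edges (rev vs) = path_edges vs"
  using pe_rev_sub[of vs] pe_rev_sub[of "rev vs"] by simp

lemma seg_fiber:
  assumes fE: "finite E" and s1: "is_segment V E vs" and s2: "is_segment V E ws"
   and pe: "path_edges ws = path_edges vs"
  shows "ws = vs \<or> ws = rev vs"
proof -
  note D1 = seg_facts(5)[OF s1] and l1 = seg_facts(3)[OF s1]
  note d2 = seg_facts(2)[OF s2] and l2 = seg_facts(3)[OF s2] and dh = seg_facts(6)[OF s2]
  have "{ws!0, ws!1} \<in> path_edges ws" using l2 unfolding path_edges_def by force
  then have "{ws!0, ws!1} \<in> path_edges vs" using pe by simp
  then obtain i where i: "{ws!0, ws!1} = {vs!i, vs!Suc i}" "Suc i < length vs" unfolding path_edges_def by auto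
  consider "ws!0 = vs!i" "ws!1 = vs!Suc i" | "ws!0 = vs!Suc i" "ws!1 = vs!i" using i(1) by (metis doubleton_eq_iff)
  then show ?thesis
  proof cases
    case 1
    have "i = 0"
    proof (rule ccontr)
      assume "i \<noteq> 0" then have "degree E (vs!i) = 2" using D1 i by simp
      thus False using 1 dh by simp
    qed
    then have "vs = ws" using seg_inj[OF fE s1 s2] 1 by simp
    thus ?thesis by simp
  next
    case 2
    have si: "Suc i = length vs - 1"
    proof (rule ccontr)
      assume "Suc i \<noteq> length vs - 1" then have "Suc (Suc i) < length vs" using i by arith
      then have "degree E (vs!Suc i) = 2" using D1 by simp
      thus False using 2 dh by simp
    qed
    have "rev vs ! 0 = vs!(length vs - 1)" using l1 rev_nth[of 0 vs] seg_facts(4)[OF s1] by simp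
    then have "rev vs ! 0 = vs!Suc i" using si by simp
    moreover have "rev vs ! 1 = vs ! i"
    proof -
      have "i = length vs - 2" using si by arith
      then show ?thesis using l1 rev_nth[of 1 vs] by (simp add: numeral_2_eq_2)
    qed
    ultimately have "rev vs = ws" using seg_inj[OF fE seg_rev[OF s1] s2] 2 by simp
    thus ?thesis by simp
  qed
qed

lemma seg_exists:
  assumes t: "is_tree V E" and v: "degree E v \<noteq> 2" and e: "{v,w} \<in> E"
  shows "\<exists>vs. is_segment V E vs \<and> vs!0 = v \<and> vs!1 = w"
proof -
  have sg: "simple_graph V E" using tree_sg[OF t] .
  have fV: "finite V" using sg by (rule sg_finV)
  have fE: "finite E" using sg_finE[OF sg] .
  have vw: "v \<noteq> w" "v \<in> V" "w \<in> V" using sg_edge[OF sg e] by auto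
  define P where "P = {vs. is_path V E vs \<and> 2 \<le> length vs \<and> vs!0 = v \<and> vs!1 = w \<and>
     (\<forall>i. 0 < i \<and> Suc i < length vs \<longrightarrow> degree E (vs!i) = 2)}"
  have p0: "is_path V E [v,w]"
    using e vw unfolding is_path_def is_walk_def adj_def
    by (auto simp: nth_Cons split: nat.splits)
  have "[v,w] \<in> P" using p0 unfolding P_def by (auto simp: nth_Cons split: nat.splits)
  moreover have finP: "finite P" using finite_paths[OF fV, of E] unfolding P_def
    by (rule finite_subset[rotated]) auto
  ultimately obtain vs where vs: "vs \<in> P" and mx: "\<forall>ws\<in>P. length ws \<le> length vs"
    using max_length_ex by blast
  have p: "is_path V E vs" and l: "2 \<le> length vs" and v0: "vs!0 = v" and v1: "vs!1 = w"
    and D: "\<forall>i. 0 < i \<and> Suc i < length vs \<longrightarrow> degree E (vs!i) = 2" using vs P_def by auto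
  have ne: "vs \<noteq> []" using l by auto
  show ?thesis
  proof (cases "degree E (last vs) = 2")
    case False
    have "is_segment V E vs" unfolding is_segment_def using p l False D v0 v ne
      by (simp add: hd_conv_nth)
    then show ?thesis using v0 v1 by blast
  next
    case True
    define x' where "x' = last vs"
    define p' where "p' = vs ! (length vs - 2)"
    have ep: "{p', x'} \<in> E" using path_last_edge[OF p l] x'_def p'_def by simp
    have fin: "finite {e\<in>E. x' \<in> e}" using fE by simp
    have c2: "card {e\<in>E. x' \<in> e} = 2" using True unfolding x'_def degree_def by simp
    have "\<exists>e\<in>{e\<in>E. x' \<in> e}. e \<noteq> {p', x'}"
    proof (rule ccontr)
      assume "\<not> ?thesis"
      then have sub: "{e\<in>E. x' \<in> e} \<subseteq> {{p', x'}}" by blast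
      have "card {e\<in>E. x' \<in> e} \<le> card {{p', x'}}" using card_mono[OF _ sub] by simp
      then have "card {e\<in>E. x' \<in> e} \<le> 1" by simp
      thus False using c2 by simp
    qed
    then obtain e' where e': "e' \<in> E" "x' \<in> e'" "e' \<noteq> {p', x'}" by blast
    then obtain u where u: "e' = {x',u}" "u \<noteq> x'" using sg_edge_form[OF sg] by blast
    have eu: "{last vs, u} \<in> E" using e' u x'_def by simp
    have "u = p'" unfolding p'_def
    proof (rule max_path_nbr[OF t p l eu])
      assume nu: "u \<notin> set vs"
      have au: "adj E (last vs) u" using eu unfolding adj_def .
      have uV: "u \<in> V" using sg_edge[OF sg eu] by simp
      have pu: "is_path V E (vs @ [u])" using path_snoc[OF p au uV nu] .
      have "\<forall>i. 0 < i \<and> Suc i < length (vs @ [u]) \<longrightarrow> degree E ((vs @ [u])!i) = 2"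
      proof (intro allI impI)
        fix i assume i: "0 < i \<and> Suc i < length (vs @ [u])"
        show "degree E ((vs @ [u])!i) = 2"
        proof (cases "Suc i < length vs")
          case True then show ?thesis using D i by (simp add: nth_append)
        next
          case False
          moreover have "Suc i < length vs + 1" using i by simp
          ultimately have "i = length vs - 1" by arith
          then show ?thesis using True ne by (simp add: nth_append last_conv_nth)
        qed
      qed
      then have "vs @ [u] \<in> P" using l pu v0 v1 ne unfolding P_def by (simp add: nth_append)
      then have "length (vs @ [u]) \<le> length vs" using mx by blast
      then show False by simp
    qed
    then show ?thesis using u e'(3) by (simp add: insert_commute)
  qed
qed


lemma hd_ne_last: assumes d: "distinct vs" and l: "2 \<le> length vs" shows "hd vs \<noteq> last vs"
proof -
  have ne: "vs \<noteq> []" using l by auto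
  have "hd vs = vs!0" using ne by (simp add: hd_conv_nth)
  moreover have "last vs = vs!(length vs - 1)" using ne by (simp add: last_conv_nth)
  moreover have "vs!0 \<noteq> vs!(length vs - 1)" using dist_nth_ne[OF d, of 0 "length vs - 1"] l ne by simp
  ultimately show ?thesis by simp
qed

lemma seg_count:
  assumes t: "is_tree V E"
  shows "2 * num_segments V E = (\<Sum>v\<in>{v\<in>V. degree E v \<noteq> 2}. degree E v)"
proof -
  have sg: "simple_graph V E" using tree_sg[OF t] .
  have fV: "finite V" using sg by (rule sg_finV)
  have fE: "finite E" using sg_finE[OF sg] .
  define SL where "SL = {vs. is_segment V E vs}"
  have finSL: "finite SL" using finite_paths[OF fV, of E] unfolding SL_def is_segment_def
    by (rule finite_subset[rotated]) auto
  define D where "D = (SIGMA v:{v\<in>V. degree E v \<noteq> 2}. {e\<in>E. v\<in>e})"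
  have cD: "card D = (\<Sum>v\<in>{v\<in>V. degree E v \<noteq> 2}. degree E v)"
    unfolding D_def degree_def using fV fE by simp
  have bij: "bij_betw (\<lambda>vs. (vs!0, {vs!0, vs!1})) SL D"
    unfolding bij_betw_def
  proof (intro conjI)
    show "inj_on (\<lambda>vs. (vs!0, {vs!0, vs!1})) SL"
    proof (rule inj_onI)
      fix vs ws assume a: "vs \<in> SL" "ws \<in> SL" "(vs!0, {vs!0, vs!1}) = (ws!0, {ws!0, ws!1})"
      have s1: "is_segment V E vs" and s2: "is_segment V E ws" using a SL_def by auto
      have "vs!0 \<noteq> vs!1" using dist_nth_ne[OF seg_facts(2)[OF s1], of 0 1] seg_facts(3,4)[OF s1] by simp
      moreover have "ws!0 \<noteq> ws!1" using dist_nth_ne[OF seg_facts(2)[OF s2], of 0 1] seg_facts(3,4)[OF s2] by simp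
      moreover have "vs!0 = ws!0" "{vs!0, vs!1} = {ws!0, ws!1}" using a(3) by auto
      ultimately have "vs!1 = ws!1" by (auto simp: doubleton_eq_iff)
      thus "vs = ws" using seg_inj[OF fE s1 s2] a(3) by auto
    qed
    show "(\<lambda>vs. (vs!0, {vs!0, vs!1})) ` SL = D"
    proof
      show "(\<lambda>vs. (vs!0, {vs!0, vs!1})) ` SL \<subseteq> D"
      proof
        fix x assume "x \<in> (\<lambda>vs. (vs!0, {vs!0, vs!1})) ` SL"
        then obtain vs where vs: "is_segment V E vs" "x = (vs!0, {vs!0, vs!1})" using SL_def by auto
        have "0 < length vs" using seg_facts(3)[OF vs(1)] by arith
        then have "vs!0 \<in> V" using seg_facts(8)[OF vs(1)] nth_mem[of 0 vs] by auto
        moreover have "Suc 0 < length vs" using seg_facts(3)[OF vs(1)] by arith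
        then have "{vs!0, vs!1} \<in> E" using seg_facts(1)[OF vs(1), of 0] by simp
        ultimately show "x \<in> D" using vs seg_facts(6)[OF vs(1)] unfolding D_def by simp
      qed
      show "D \<subseteq> (\<lambda>vs. (vs!0, {vs!0, vs!1})) ` SL"
      proof
        fix x assume "x \<in> D"
        then obtain v e where x: "x = (v,e)" "v \<in> V" "degree E v \<noteq> 2" "e \<in> E" "v \<in> e" unfolding D_def by auto
        then obtain w where w: "e = {v,w}" using sg_edge_form[OF sg] by blast
        have "{v,w} \<in> E" using x(4) w by simp
        then obtain vs where vs: "is_segment V E vs" "vs!0 = v" "vs!1 = w" using seg_exists[OF t x(3)] by blast
        have "vs \<in> SL" using vs(1) SL_def by simp
        moreover have "x = (vs!0, {vs!0, vs!1})" using x(1) w vs(2,3) by simp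
        ultimately show "x \<in> (\<lambda>vs. (vs!0, {vs!0, vs!1})) ` SL" by (rule rev_image_eqI)
      qed
    qed
  qed
  have cSL: "card SL = card D" using bij_betw_same_card[OF bij] .
  have seg: "segments V E = path_edges ` SL" unfolding segments_def SL_def by auto
  have "card SL = (\<Sum>P\<in>path_edges ` SL. card {vs\<in>SL. path_edges vs = P})"
    using sum.image_gen[OF finSL, of "\<lambda>_. 1::nat" path_edges] by simp
  also have "\<dots> = (\<Sum>P\<in>path_edges ` SL. 2)"
  proof (rule sum.cong[OF refl])
    fix P assume "P \<in> path_edges ` SL"
    then obtain vs where vs: "is_segment V E vs" "P = path_edges vs" using SL_def by auto
    have "{ws\<in>SL. path_edges ws = P} = {vs, rev vs}"
    proof
      show "{ws\<in>SL. path_edges ws = P} \<subseteq> {vs, rev vs}"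
        using seg_fiber[OF fE vs(1)] vs SL_def by auto
      show "{vs, rev vs} \<subseteq> {ws\<in>SL. path_edges ws = P}"
        using seg_rev[OF vs(1)] pe_rev[of vs] vs SL_def by auto
    qed
    moreover have "vs \<noteq> rev vs"
    proof
      assume "vs = rev vs"
      then have "hd vs = hd (rev vs)" by simp
      also have "\<dots> = last vs" using seg_facts(4)[OF vs(1)] by (simp add: hd_rev)
      finally show False using hd_ne_last[OF seg_facts(2,3)[OF vs(1)]] by simp
    qed
    ultimately show "card {ws\<in>SL. path_edges ws = P} = 2" by simp
  qed
  also have "\<dots> = 2 * card (segments V E)" using seg by simp
  finally show ?thesis using cSL cD num_segments_def by simp
qed


lemma deg_pos:
  assumes t: "is_tree V E" and c: "2 \<le> card V" and v: "v \<in> V"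
  shows "1 \<le> degree E v"
proof -
  have sg: "simple_graph V E" using tree_sg[OF t] .
  have fV: "finite V" using sg by (rule sg_finV)
  have fE: "finite E" using sg_finE[OF sg] .
  obtain a b where ab: "a \<in> V" "b \<in> V" "a \<noteq> b" using card2_ex[OF fV c] by blast
  obtain y where y: "y \<in> V" "y \<noteq> v" using ab by metis
  obtain ws where ws: "is_walk V E ws" "hd ws = v" "last ws = y"
    using con_walk[OF tree_con[OF t] v y(1)] by blast
  have l2: "2 \<le> length ws" using walk_len2[OF ws(1)] ws(2,3) y(2) by simp
  then have "Suc 0 < length ws" by arith
  then have e: "{ws!0, ws!Suc 0} \<in> E" using walk_adj[OF ws(1), of 0] by simp
  have "ws!0 = v" using ws(2) walk_ne[OF ws(1)] by (simp add: hd_conv_nth)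
  then have "{ws!0, ws!Suc 0} \<in> {e\<in>E. v \<in> e}" using e by simp
  then have "{e\<in>E. v \<in> e} \<noteq> {}" by blast
  moreover have "finite {e\<in>E. v \<in> e}" using fE by simp
  ultimately have "card {e\<in>E. v \<in> e} > 0" by (simp add: card_gt_0_iff)
  then show ?thesis unfolding degree_def by simp
qed

theorem theorem1:
  fixes V :: "'a set" and E :: "'a set set" and n k :: nat
  assumes "chemical_tree V E"
    and "card V = n"
    and "num_segments V E = k"
    and "3 \<le> k" and "k \<le> n - 1"
  shows "(k mod 3 = 0 \<longrightarrow>
            int (M1 V E) \<le> 4 * int n + 2 * int k - 10 \<and>
            (int (M1 V E) = 4 * int n + 2 * int k - 10 \<longleftrightarrow> card {v \<in> V. degree E v = 3} = 1)) \<and>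
         (k mod 3 = 1 \<longrightarrow>
            int (M1 V E) \<le> 4 * int n + 2 * int k - 8 \<and>
            (int (M1 V E) = 4 * int n + 2 * int k - 8 \<longleftrightarrow> card {v \<in> V. degree E v = 3} = 0)) \<and>
         (k mod 3 = 2 \<longrightarrow>
            int (M1 V E) \<le> 4 * int n + 2 * int k - 12 \<and>
            (int (M1 V E) = 4 * int n + 2 * int k - 12 \<longleftrightarrow> card {v \<in> V. degree E v = 3} = 2))"
proof -
  have t: "is_tree V E" and d4: "\<forall>v\<in>V. degree E v \<le> 4"
    using assms(1) unfolding chemical_tree_def by auto
  have sg: "simple_graph V E" using tree_sg[OF t] .
  have fV: "finite V" using sg by (rule sg_finV)
  have n4: "4 \<le> n" using assms(4,5) by arith
  have d1: "\<forall>v\<in>V. 1 \<le> degree E v" using deg_pos[OF t] assms(2) n4 by auto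
  have hs: "(\<Sum>v\<in>V. degree E v) = 2 * (n - 1)"
    using handshake[OF sg] tree_card_E[OF t] assms(2) by simp
  have "2 * k = (\<Sum>v\<in>{v\<in>V. degree E v \<noteq> 2}. degree E v)"
    using seg_count[OF t] assms(3) by simp
  also have "\<dots> = (\<Sum>v\<in>V. if degree E v \<noteq> 2 then degree E v else 0)"
    by (rule sum.inter_filter[OF fV])
  finally have sc: "2 * k = (\<Sum>v\<in>V. if degree E v \<noteq> 2 then degree E v else 0)" .
  define c3 where "c3 = card {v\<in>V. degree E v = 3}"
  define c4 where "c4 = card {v\<in>V. degree E v = 4}"
  have "c3 = (\<Sum>v\<in>{v\<in>V. degree E v = 3}. 1)" unfolding c3_def by simp
  also have "\<dots> = (\<Sum>v\<in>V. if degree E v = 3 then 1 else 0)" by (rule sum.inter_filter[OF fV])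
  finally have c3s: "c3 = (\<Sum>v\<in>V. if degree E v = 3 then 1 else 0)" .
  have "c4 = (\<Sum>v\<in>{v\<in>V. degree E v = 4}. 1)" unfolding c4_def by simp
  also have "\<dots> = (\<Sum>v\<in>V. if degree E v = 4 then 1 else 0)" by (rule sum.inter_filter[OF fV])
  finally have c4s: "c4 = (\<Sum>v\<in>V. if degree E v = 4 then 1 else 0)" .
  have cases: "degree E v = 1 \<or> degree E v = 2 \<or> degree E v = 3 \<or> degree E v = 4" if "v \<in> V" for v
    using d1 d4 that by fastforce
  have id1: "(\<Sum>v\<in>V. (degree E v)^2 + 2 * (if degree E v = 3 then 1 else 0) + 4)
      = (\<Sum>v\<in>V. (if degree E v \<noteq> 2 then degree E v else 0) + 4 * degree E v)"
  proof (rule sum.cong[OF refl])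
    fix v assume vV: "v \<in> V"
    from cases[OF vV] show "(degree E v)^2 + 2 * (if degree E v = 3 then 1 else 0) + 4
      = (if degree E v \<noteq> 2 then degree E v else 0) + 4 * degree E v"
      by (elim disjE) simp_all
  qed
  have id2: "(\<Sum>v\<in>V. (if degree E v \<noteq> 2 then degree E v else 0) + degree E v)
      = (\<Sum>v\<in>V. 2 + 4 * (if degree E v = 3 then 1 else 0) + 6 * (if degree E v = 4 then 1 else 0))"
  proof (rule sum.cong[OF refl])
    fix v assume vV: "v \<in> V"
    from cases[OF vV] show "(if degree E v \<noteq> 2 then degree E v else 0) + degree E v
      = 2 + 4 * (if degree E v = 3 then 1 else 0) + 6 * (if degree E v = 4 then (1::nat) else 0)"
      by (elim disjE) simp_all
  qed
  have m1: "M1 V E = (\<Sum>v\<in>V. (degree E v)^2)" unfolding M1_def by simp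
  have e1: "M1 V E + 2 * c3 + 4 * n = 2 * k + 4 * (2 * (n - 1))"
  proof -
    have "M1 V E + 2 * c3 + 4 * n = (\<Sum>v\<in>V. (degree E v)^2 + 2 * (if degree E v = 3 then 1 else 0) + 4)"
      using m1 c3s assms(2) by (simp add: sum.distrib sum_distrib_left)
    also have "\<dots> = (\<Sum>v\<in>V. (if degree E v \<noteq> 2 then degree E v else 0) + 4 * degree E v)" by (rule id1)
    also have "\<dots> = 2 * k + 4 * (2 * (n - 1))"
      using sc hs by (simp add: sum.distrib sum_distrib_left[symmetric])
    finally show ?thesis .
  qed
  have e2: "2 * k + 2 * (n - 1) = 2 * n + 4 * c3 + 6 * c4"
  proof -
    have "2 * k + 2 * (n - 1) = (\<Sum>v\<in>V. (if degree E v \<noteq> 2 then degree E v else 0) + degree E v)"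
      using sc hs by (simp add: sum.distrib)
    also have "\<dots> = (\<Sum>v\<in>V. 2 + 4 * (if degree E v = 3 then 1 else 0) + 6 * (if degree E v = 4 then 1 else 0))"
      by (rule id2)
    also have "\<dots> = (\<Sum>v\<in>V. 2) + 4 * (\<Sum>v\<in>V. if degree E v = 3 then 1 else 0)
        + 6 * (\<Sum>v\<in>V. if degree E v = 4 then 1 else 0)"
      by (simp only: sum.distrib sum_distrib_left)
    also have "\<dots> = 2 * n + 4 * c3 + 6 * c4"
      using c3s c4s assms(2) by simp
    finally show ?thesis .
  qed
  have K: "k = 2 * c3 + 3 * c4 + 1" using e2 n4 by arith
  have M: "int (M1 V E) = 4 * int n + 2 * int k - 8 - 2 * int c3" using e1 n4 by arith
  have r0: "k mod 3 = 0 \<Longrightarrow> c3 mod 3 = 1" using K by presburger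
  have r1: "k mod 3 = 1 \<Longrightarrow> c3 mod 3 = 0" using K by presburger
  have r2: "k mod 3 = 2 \<Longrightarrow> c3 mod 3 = 2" using K by presburger
  have g0: "c3 mod 3 = 1 \<Longrightarrow> 1 \<le> c3" by (cases c3) auto
  have g2: "c3 mod 3 = 2 \<Longrightarrow> 2 \<le> c3"
  proof -
    assume h: "c3 mod 3 = 2"
    show "2 \<le> c3"
    proof (rule ccontr)
      assume "\<not> 2 \<le> c3"
      then have "c3 < 3" by simp
      then have "c3 mod 3 = c3" by simp
      then show False using h \<open>\<not> 2 \<le> c3\<close> by simp
    qed
  qed
  have A0: "k mod 3 = 0 \<longrightarrow>
            int (M1 V E) \<le> 4 * int n + 2 * int k - 10 \<and>
            (int (M1 V E) = 4 * int n + 2 * int k - 10 \<longleftrightarrow> c3 = 1)"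
  proof
    assume "k mod 3 = 0"
    then have "1 \<le> c3" by (rule g0[OF r0])
    then show "int (M1 V E) \<le> 4 * int n + 2 * int k - 10 \<and>
            (int (M1 V E) = 4 * int n + 2 * int k - 10 \<longleftrightarrow> c3 = 1)" using M by linarith
  qed
  have A1: "k mod 3 = 1 \<longrightarrow>
            int (M1 V E) \<le> 4 * int n + 2 * int k - 8 \<and>
            (int (M1 V E) = 4 * int n + 2 * int k - 8 \<longleftrightarrow> c3 = 0)"
    using M by linarith
  have A2: "k mod 3 = 2 \<longrightarrow>
            int (M1 V E) \<le> 4 * int n + 2 * int k - 12 \<and>
            (int (M1 V E) = 4 * int n + 2 * int k - 12 \<longleftrightarrow> c3 = 2)"
  proof
    assume "k mod 3 = 2"
    then have "2 \<le> c3" by (rule g2[OF r2])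
    then show "int (M1 V E) \<le> 4 * int n + 2 * int k - 12 \<and>
            (int (M1 V E) = 4 * int n + 2 * int k - 12 \<longleftrightarrow> c3 = 2)" using M by linarith
  qed
  show ?thesis unfolding c3_def[symmetric] using A0 A1 A2 by blast
qed

end
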